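(* Let $0<\beta<\gamma\le1$, $p>0$, $m\ge0$ an integer, and $\theta=(k_r)$ a lacunary sequence. Then $N_\theta^\beta(p,F,\Delta^m)\subset N_\theta^\gamma(p,F,\Delta^m)$, and this inclusion is strict.
   Context: A fuzzy number is a map $X:\mathbb{R}\to[0,1]$ which is normal, fuzzy convex, upper semicontinuous, with compact closure of $\{t:X(t)>0\}$; $L(\mathbb{R})$ is the set of fuzzy numbers. Level sets $[X]^\alpha=\{t:X(t)\ge\alpha\}$ ($\alpha\in(0,1]$), $[X]^0=\overline{\{t:X(t)>0\}}$, are compact intervals $[u^\alpha,v^\alpha]$. Subtraction: $[X-Y]^\alpha=[u_1^\alpha-v_2^\alpha,v_1^\alpha-u_2^\alpha]$. Metric: $d(X,Y)=\sup_{\alpha\in[0,1]}\max\{|u_1^\alpha-u_2^\alpha|,|v_1^\alpha-v_2^\alpha|\}$. $(\Delta^0X)_k=X_k$, $(\Delta^1X)_k=X_k-X_{k+1}$, $(\Delta^mX)_k=(\Delta^1(\Delta^{m-1}X))_k$. A lacunary sequence is an increasing integer sequence $\theta=(k_r)_{r\ge0}$ with $k_0=0$, $h_r=k_r-k_{r-1}\to\infty$; $I_r=(k_{r-1},k_r]$. For $\beta\in(0,1]$, $N_\theta^\beta(p,F,\Delta^m)$ is the set of sequences $X=(X_k)$ of fuzzy numbers for which there is $X_0\in L(\mathbb{R})$ with $\lim_r\frac{1}{h_r^\beta}\sum_{k\in I_r}d(\Delta^mX_k,X_0)^p=0$. *)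

theory Defs
  imports "HOL-Analysis.Analysis"
begin

definition fuzzy_number :: "(real \<Rightarrow> real) \<Rightarrow> bool" where
  "fuzzy_number X \<longleftrightarrow>
     (\<forall>t. 0 \<le> X t \<and> X t \<le> 1) \<and>
     (\<exists>t. X t = 1) \<and>
     (\<forall>x y l. 0 \<le> l \<and> l \<le> 1 \<longrightarrow> min (X x) (X y) \<le> X (l * x + (1 - l) * y)) \<and>
     (\<forall>t e. 0 < e \<longrightarrow> (\<exists>d>0. \<forall>s. \<bar>s - t\<bar> < d \<longrightarrow> X s < X t + e)) \<and>
     compact (closure {t. 0 < X t})"

definition level :: "(real \<Rightarrow> real) \<Rightarrow> real \<Rightarrow> real set" where
  "level X a = (if a = 0 then closure {t. 0 < X t} else {t. a \<le> X t})"

definition lo :: "(real \<Rightarrow> real) \<Rightarrow> real \<Rightarrow> real" where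
  "lo X a = Inf (level X a)"

definition hi :: "(real \<Rightarrow> real) \<Rightarrow> real \<Rightarrow> real" where
  "hi X a = Sup (level X a)"

text \<open>Subtraction: the fuzzy number whose alpha-level sets are
  [lo X a - hi Y a, hi X a - lo Y a]; its membership function is recovered
  from these level sets.\<close>

definition fsub :: "(real \<Rightarrow> real) \<Rightarrow> (real \<Rightarrow> real) \<Rightarrow> (real \<Rightarrow> real)" where
  "fsub X Y = (\<lambda>t. Sup (insert 0 {a. 0 < a \<and> a \<le> 1 \<and>
                   lo X a - hi Y a \<le> t \<and> t \<le> hi X a - lo Y a}))"

definition fdist :: "(real \<Rightarrow> real) \<Rightarrow> (real \<Rightarrow> real) \<Rightarrow> real" where
  "fdist X Y = (SUP a\<in>{0..1}. max \<bar>lo X a - lo Y a\<bar> \<bar>hi X a - hi Y a\<bar>)"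

fun fdelta :: "nat \<Rightarrow> (nat \<Rightarrow> real \<Rightarrow> real) \<Rightarrow> nat \<Rightarrow> real \<Rightarrow> real" where
  "fdelta 0 X = X"
| "fdelta (Suc m) X = (\<lambda>k. fsub (fdelta m X k) (fdelta m X (Suc k)))"

text \<open>Lacunary sequences; h_(r+1) = k_(r+1) - k_r, I_(r+1) = (k_r, k_(r+1)].\<close>

definition lacunary :: "(nat \<Rightarrow> nat) \<Rightarrow> bool" where
  "lacunary \<theta> \<longleftrightarrow> \<theta> 0 = 0 \<and> strict_mono \<theta> \<and>
     filterlim (\<lambda>r. \<theta> (Suc r) - \<theta> r) at_top at_top"

definition N_theta :: "(nat \<Rightarrow> nat) \<Rightarrow> real \<Rightarrow> real \<Rightarrow> nat \<Rightarrow> (nat \<Rightarrow> real \<Rightarrow> real) set" where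
  "N_theta \<theta> \<beta> p m = {X. (\<forall>k. fuzzy_number (X k)) \<and>
     (\<exists>X0. fuzzy_number X0 \<and>
        (\<lambda>r. (1 / real (\<theta> (Suc r) - \<theta> r) powr \<beta>) *
              (\<Sum>k\<in>{\<theta> r<..\<theta> (Suc r)}. fdist (fdelta m X k) X0 powr p))
        \<longlonglongrightarrow> 0)}"

end

theory Submission
  imports Defs
begin

definition crisp :: "real \<Rightarrow> real \<Rightarrow> real" where
  "crisp c = (\<lambda>t. if t = c then 1 else 0)"

lemma crisp_fuzzy: "fuzzy_number (crisp c)"
proof -
  have s: "{t. 0 < crisp c t} = {c}" by (auto simp: crisp_def)
  have usc: "\<exists>d>0. \<forall>s. \<bar>s - t\<bar> < d \<longrightarrow> crisp c s < crisp c t + e" if "0 < e" for t e :: real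
  proof (cases "t = c")
    case True thus ?thesis using that by (intro exI[of _ 1]) (auto simp: crisp_def)
  next
    case False thus ?thesis using that by (intro exI[of _ "\<bar>t - c\<bar>"]) (auto simp: crisp_def)
  qed
  have cv: "min (crisp c x) (crisp c y) \<le> crisp c (l * x + (1 - l) * y)" for x y l
  proof (cases "x = c \<and> y = c")
    case True
    then have "l * x + (1 - l) * y = c" by (simp add: algebra_simps)
    thus ?thesis by (simp add: crisp_def)
  qed (auto simp: crisp_def)
  show ?thesis unfolding fuzzy_number_def s
    using usc cv by (auto simp: crisp_def intro: exI[of _ c])
qed

lemma crisp_level: "0 \<le> a \<Longrightarrow> a \<le> 1 \<Longrightarrow> level (crisp c) a = {c}"
  by (auto simp: level_def crisp_def)

lemma crisp_lo: "0 \<le> a \<Longrightarrow> a \<le> 1 \<Longrightarrow> lo (crisp c) a = c"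
  by (simp add: lo_def crisp_level)

lemma crisp_hi: "0 \<le> a \<Longrightarrow> a \<le> 1 \<Longrightarrow> hi (crisp c) a = c"
  by (simp add: hi_def crisp_level)

lemma crisp_fsub: "fsub (crisp c) (crisp d) = crisp (c - d)"
proof
  fix t
  have eq: "{a. 0 < a \<and> a \<le> 1 \<and> lo (crisp c) a - hi (crisp d) a \<le> t \<and> t \<le> hi (crisp c) a - lo (crisp d) a}
        = (if t = c - d then {0<..1} else {})"
    by (auto simp: crisp_lo crisp_hi)
  show "fsub (crisp c) (crisp d) t = crisp (c - d) t"
  proof (cases "t = c - d")
    case True
    have "insert 0 {0<..(1::real)} = {0..1}" by auto
    thus ?thesis using True unfolding fsub_def eq by (simp add: crisp_def)
  next
    case False thus ?thesis unfolding fsub_def eq by (simp add: crisp_def)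
  qed
qed

lemma crisp_fdist: "fdist (crisp a) (crisp b) = \<bar>a - b\<bar>"
proof -
  have "fdist (crisp a) (crisp b) = (SUP x\<in>{0..1::real}. \<bar>a - b\<bar>)"
    unfolding fdist_def by (rule SUP_cong) (auto simp: crisp_lo crisp_hi)
  thus ?thesis by simp
qed

lemma fuzzy_bounded:
  assumes "fuzzy_number X"
  shows "\<exists>B. \<forall>a\<in>{0..1}. \<bar>lo X a\<bar> \<le> B \<and> \<bar>hi X a\<bar> \<le> B"
proof -
  let ?K = "closure {t. 0 < X t}"
  from assms have "compact ?K" and "\<exists>t. X t = 1" by (auto simp: fuzzy_number_def)
  then obtain t1 where t1: "X t1 = 1" by blast
  from \<open>compact ?K\<close> have "bounded ?K" by (rule compact_imp_bounded)
  then obtain B where B: "\<And>x. x \<in> ?K \<Longrightarrow> \<bar>x\<bar> \<le> B" by (auto simp: bounded_iff)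
  have "\<bar>lo X a\<bar> \<le> B \<and> \<bar>hi X a\<bar> \<le> B" if a: "a \<in> {0..1}" for a
  proof -
    have sub: "level X a \<subseteq> ?K"
      using closure_subset[of "{t. 0 < X t}"] a by (auto simp: level_def)
    have t1l: "t1 \<in> level X a"
      using a t1 closure_subset[of "{t. 0 < X t}"] by (auto simp: level_def)
    have bb: "\<And>x. x \<in> level X a \<Longrightarrow> \<bar>x\<bar> \<le> B" using sub B by blast
    have bdb: "bdd_below (level X a)" using bb by (intro bdd_belowI[of _ "-B"]) force
    have bda: "bdd_above (level X a)" using bb by (intro bdd_aboveI[of _ "B"]) force
    have ne: "level X a \<noteq> {}" using t1l by blast
    have "Inf (level X a) \<le> t1" using cInf_lower[OF t1l bdb] .
    moreover have "-B \<le> Inf (level X a)" using bb ne by (intro cInf_greatest) force+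
    moreover have "t1 \<le> Sup (level X a)" using cSup_upper[OF t1l bda] .
    moreover have "Sup (level X a) \<le> B" using bb ne by (intro cSup_least) force+
    moreover have "\<bar>t1\<bar> \<le> B" using bb t1l by blast
    ultimately show ?thesis unfolding lo_def hi_def by linarith
  qed
  thus ?thesis by blast
qed

lemma fdist_crisp_ge:
  assumes "fuzzy_number X"
  shows "\<bar>c - lo X 1\<bar> \<le> fdist (crisp c) X"
proof -
  obtain B where B: "\<forall>a\<in>{0..1}. \<bar>lo X a\<bar> \<le> B \<and> \<bar>hi X a\<bar> \<le> B"
    using fuzzy_bounded[OF assms] by blast
  have bd: "bdd_above ((\<lambda>a. max \<bar>lo (crisp c) a - lo X a\<bar> \<bar>hi (crisp c) a - hi X a\<bar>) ` {0..1})"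
  proof (rule bdd_aboveI[of _ "\<bar>c\<bar> + B"])
    fix x assume "x \<in> (\<lambda>a. max \<bar>lo (crisp c) a - lo X a\<bar> \<bar>hi (crisp c) a - hi X a\<bar>) ` {0..1}"
    then obtain a where a: "a \<in> {0..1}" and x: "x = max \<bar>lo (crisp c) a - lo X a\<bar> \<bar>hi (crisp c) a - hi X a\<bar>" by blast
    have "\<bar>lo X a\<bar> \<le> B" "\<bar>hi X a\<bar> \<le> B" using a B by auto
    then show "x \<le> \<bar>c\<bar> + B" using a x by (simp add: crisp_lo crisp_hi) arith
  qed
  have "max \<bar>lo (crisp c) 1 - lo X 1\<bar> \<bar>hi (crisp c) 1 - hi X 1\<bar> \<le> fdist (crisp c) X"
    unfolding fdist_def by (rule cSUP_upper[OF _ bd]) auto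
  thus ?thesis by (simp add: crisp_lo crisp_hi)
qed

fun rdelta :: "nat \<Rightarrow> (nat \<Rightarrow> real) \<Rightarrow> nat \<Rightarrow> real" where
  "rdelta 0 x = x"
| "rdelta (Suc m) x = (\<lambda>k. rdelta m x k - rdelta m x (Suc k))"

lemma fdelta_crisp: "fdelta m (\<lambda>k. crisp (x k)) = (\<lambda>k. crisp (rdelta m x k))"
  by (induction m) (auto simp: crisp_fsub)

definition anti :: "(nat \<Rightarrow> real) \<Rightarrow> nat \<Rightarrow> real" where
  "anti y k = - (\<Sum>j<k. y j)"

lemma rdelta_anti: "rdelta m ((anti ^^ m) y) = y"
proof (induction m arbitrary: y)
  case 0 then show ?case by simp
next
  case (Suc m)
  have "rdelta (Suc m) ((anti ^^ Suc m) y) = (\<lambda>k. anti y k - anti y (Suc k))"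
    by (simp only: funpow_Suc_right o_apply rdelta.simps Suc)
  also have "\<dots> = y" by (auto simp: anti_def)
  finally show ?case .
qed

lemma sum_split:
  assumes "a + n \<le> b"
  shows "(\<Sum>k\<in>{a<..b}. if k \<le> a + n then u else v) = real n * u + real (b - a - n) * v"
proof -
  have un: "{a<..b} = {a<..a+n} \<union> {a+n<..b}" using assms by auto
  have "(\<Sum>k\<in>{a<..b}. if k \<le> a + n then u else v)
      = (\<Sum>k\<in>{a<..a+n}. if k \<le> a + n then u else v) + (\<Sum>k\<in>{a+n<..b}. if k \<le> a + n then u else v)"
    unfolding un by (rule sum.union_disjoint) auto
  also have "\<dots> = (\<Sum>k\<in>{a<..a+n}. u) + (\<Sum>k\<in>{a+n<..b}. v)"
    by (intro arg_cong2[where f="(+)"] sum.cong) auto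
  also have "\<dots> = real n * u + real (b - a - n) * v" by simp
  finally show ?thesis .
qed

theorem theorem2p12:
  fixes \<theta> :: "nat \<Rightarrow> nat" and \<beta> \<gamma> p :: real and m :: nat
  assumes "0 < \<beta>" and "\<beta> < \<gamma>" and "\<gamma> \<le> 1" and "0 < p" and "lacunary \<theta>"
  shows "N_theta \<theta> \<beta> p m \<subset> N_theta \<theta> \<gamma> p m"
proof -
  define h where "h r = \<theta> (Suc r) - \<theta> r" for r
  have smono: "strict_mono \<theta>" and hlim0: "filterlim h at_top at_top"
    using assms(5) unfolding lacunary_def h_def[abs_def] by auto
  have hge: "1 \<le> h r" for r
  proof -
    have "\<theta> r < \<theta> (Suc r)" using smono by (simp add: strict_mono_def)
    thus ?thesis unfolding h_def by simp
  qed
  have hpos: "0 < real (h r)" for r using hge[of r] by simp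
  have hlim: "filterlim (\<lambda>r. real (h r)) at_top sequentially"
    by (rule filterlim_compose[OF filterlim_real_sequentially hlim0])
  have mono_pow: "real (h r) powr a \<le> real (h r) powr b" if "a \<le> b" for r a b
    using hge[of r] that by (intro powr_mono) auto
  have incl: "N_theta \<theta> \<beta> p m \<subseteq> N_theta \<theta> \<gamma> p m"
  proof
    fix X assume "X \<in> N_theta \<theta> \<beta> p m"
    then obtain X0 where fz: "\<forall>k. fuzzy_number (X k)" and X0: "fuzzy_number X0"
      and lim: "(\<lambda>r. (1 / real (\<theta> (Suc r) - \<theta> r) powr \<beta>) *
              (\<Sum>k\<in>{\<theta> r<..\<theta> (Suc r)}. fdist (fdelta m X k) X0 powr p)) \<longlonglongrightarrow> 0"
      unfolding N_theta_def by blast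
    define S where "S r = (\<Sum>k\<in>{\<theta> r<..\<theta> (Suc r)}. fdist (fdelta m X k) X0 powr p)" for r
    have S0: "0 \<le> S r" for r unfolding S_def by (intro sum_nonneg) auto
    have "(\<lambda>r. (1 / real (\<theta> (Suc r) - \<theta> r) powr \<gamma>) * S r) \<longlonglongrightarrow> 0"
    proof (rule tendsto_sandwich[OF _ _ tendsto_const lim[folded S_def]])
      show "\<forall>\<^sub>F r in sequentially. 0 \<le> (1 / real (\<theta> (Suc r) - \<theta> r) powr \<gamma>) * S r"
        using S0 by (intro always_eventually allI mult_nonneg_nonneg) auto
      show "\<forall>\<^sub>F r in sequentially. (1 / real (\<theta> (Suc r) - \<theta> r) powr \<gamma>) * S r
             \<le> (1 / real (\<theta> (Suc r) - \<theta> r) powr \<beta>) * S r"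
      proof (intro always_eventually allI mult_right_mono S0)
        fix r
        have "real (h r) powr \<beta> \<le> real (h r) powr \<gamma>" using mono_pow assms(2) by simp
        moreover have "0 < real (h r) powr \<beta>" using hpos[of r] by simp
        ultimately show "1 / real (\<theta> (Suc r) - \<theta> r) powr \<gamma> \<le> 1 / real (\<theta> (Suc r) - \<theta> r) powr \<beta>"
          unfolding h_def by (intro divide_left_mono) auto
      qed
    qed
    thus "X \<in> N_theta \<theta> \<gamma> p m" using fz X0 unfolding N_theta_def S_def by blast
  qed
  define \<delta> where "\<delta> = (\<beta> + \<gamma>) / 2"
  have d1: "\<beta> < \<delta>" "\<delta> < \<gamma>" "\<delta> < 1" "0 < \<delta>" using assms unfolding \<delta>_def by auto
  define n where "n r = nat \<lfloor>real (h r) powr \<delta>\<rfloor>" for r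
  have n_eq: "real (n r) = real_of_int \<lfloor>real (h r) powr \<delta>\<rfloor>" for r
  proof -
    have "0 \<le> \<lfloor>real (h r) powr \<delta>\<rfloor>" by simp
    thus ?thesis unfolding n_def by simp
  qed
  have n_le_real: "real (n r) \<le> real (h r) powr \<delta>" for r
    unfolding n_eq by linarith
  have n_ge_real: "real (h r) powr \<delta> - 1 \<le> real (n r)" for r
    unfolding n_eq by linarith
  have n_le: "n r \<le> h r" for r
  proof -
    have "real (n r) \<le> real (h r) powr 1" using n_le_real[of r] mono_pow[of \<delta> 1 r] d1 by linarith
    thus ?thesis using hpos[of r] by simp
  qed
  define y where "y k = (if \<exists>r. \<theta> r < k \<and> k \<le> \<theta> r + n r then 1 else (0::real))" for k
  have yI: "y k = (if k \<le> \<theta> r + n r then 1 else 0)" if "\<theta> r < k" "k \<le> \<theta> (Suc r)" for k r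
  proof (cases "k \<le> \<theta> r + n r")
    case True thus ?thesis using that unfolding y_def by auto
  next
    case False
    have "\<not> (\<theta> s < k \<and> k \<le> \<theta> s + n s)" for s
    proof
      assume s: "\<theta> s < k \<and> k \<le> \<theta> s + n s"
      have "\<theta> s < \<theta> (Suc s)" using smono by (simp add: strict_mono_def)
      then have hs: "\<theta> s + n s \<le> \<theta> (Suc s)" using n_le[of s] unfolding h_def by linarith
      consider "s < r" | "s = r" | "r < s" by linarith
      thus False
      proof cases
        case 1
        then have "\<theta> (Suc s) \<le> \<theta> r" using smono by (simp add: strict_mono_less_eq)
        thus False using s hs that by linarith
      next
        case 2 thus False using s False by simp
      next
        case 3
        then have "\<theta> (Suc r) \<le> \<theta> s" using smono by (simp add: strict_mono_less_eq)
        thus False using s that by linarith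
      qed
    qed
    thus ?thesis using False unfolding y_def by auto
  qed
  have hr_eq: "\<theta> (Suc r) - \<theta> r - n r = h r - n r" "\<theta> (Suc r) - (\<theta> r + n r) = h r - n r" for r unfolding h_def by simp_all
  have bnd: "\<theta> r + n r \<le> \<theta> (Suc r)" for r
  proof -
    have "\<theta> r < \<theta> (Suc r)" using smono by (simp add: strict_mono_def)
    thus ?thesis using n_le[of r] unfolding h_def by linarith
  qed
  define X where "X k = crisp ((anti ^^ m) y k)" for k
  have fdX: "fdelta m X k = crisp (y k)" for k
    unfolding X_def[abs_def] fdelta_crisp rdelta_anti ..
  have Xfz: "\<forall>k. fuzzy_number (X k)" unfolding X_def by (simp add: crisp_fuzzy)
  have sumX: "(\<Sum>k\<in>{\<theta> r<..\<theta> (Suc r)}. fdist (fdelta m X k) X0 powr p)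
      = real (n r) * fdist (crisp 1) X0 powr p + real (h r - n r) * fdist (crisp 0) X0 powr p" for r X0
  proof -
    have "(\<Sum>k\<in>{\<theta> r<..\<theta> (Suc r)}. fdist (fdelta m X k) X0 powr p)
        = (\<Sum>k\<in>{\<theta> r<..\<theta> (Suc r)}. if k \<le> \<theta> r + n r then fdist (crisp 1) X0 powr p else fdist (crisp 0) X0 powr p)"
    proof (rule sum.cong[OF refl])
      fix k assume "k \<in> {\<theta> r<..\<theta> (Suc r)}"
      then have "y k = (if k \<le> \<theta> r + n r then 1 else 0)" by (intro yI) auto
      thus "fdist (fdelta m X k) X0 powr p = (if k \<le> \<theta> r + n r then fdist (crisp 1) X0 powr p else fdist (crisp 0) X0 powr p)"
        by (simp add: fdX)
    qed
    also have "\<dots> = real (n r) * fdist (crisp 1) X0 powr p + real (h r - n r) * fdist (crisp 0) X0 powr p"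
      by (subst sum_split[OF bnd]) (simp add: hr_eq)
    finally show ?thesis .
  qed
  have rdiff: "real (h r - n r) = real (h r) - real (n r)" for r using n_le[of r] by simp
  have inG: "X \<in> N_theta \<theta> \<gamma> p m"
  proof -
    have "(\<lambda>r. (1 / real (\<theta> (Suc r) - \<theta> r) powr \<gamma>) *
              (\<Sum>k\<in>{\<theta> r<..\<theta> (Suc r)}. fdist (fdelta m X k) (crisp 0) powr p)) \<longlonglongrightarrow> 0"
    proof -
      have eq: "(1 / real (\<theta> (Suc r) - \<theta> r) powr \<gamma>) *
              (\<Sum>k\<in>{\<theta> r<..\<theta> (Suc r)}. fdist (fdelta m X k) (crisp 0) powr p) = real (n r) / real (h r) powr \<gamma>" for r
        unfolding sumX by (simp add: crisp_fdist h_def)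
      have lim: "(\<lambda>r. real (h r) powr (\<delta> - \<gamma>)) \<longlonglongrightarrow> 0"
        using d1 by (intro tendsto_neg_powr hlim) auto
      have "(\<lambda>r. real (n r) / real (h r) powr \<gamma>) \<longlonglongrightarrow> 0"
      proof (rule tendsto_sandwich[OF _ _ tendsto_const lim])
        show "\<forall>\<^sub>F r in sequentially. 0 \<le> real (n r) / real (h r) powr \<gamma>" by simp
        show "\<forall>\<^sub>F r in sequentially. real (n r) / real (h r) powr \<gamma> \<le> real (h r) powr (\<delta> - \<gamma>)"
        proof (intro always_eventually allI)
          fix r
          have "real (n r) / real (h r) powr \<gamma> \<le> real (h r) powr \<delta> / real (h r) powr \<gamma>"
            using n_le_real[of r] hpos[of r] by (intro divide_right_mono) auto
          also have "\<dots> = real (h r) powr (\<delta> - \<gamma>)" using hpos[of r] by (simp add: powr_diff)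
          finally show "real (n r) / real (h r) powr \<gamma> \<le> real (h r) powr (\<delta> - \<gamma>)" .
        qed
      qed
      thus ?thesis unfolding eq .
    qed
    thus ?thesis using Xfz crisp_fuzzy unfolding N_theta_def by blast
  qed
  have notB: "X \<notin> N_theta \<theta> \<beta> p m"
  proof
    assume "X \<in> N_theta \<theta> \<beta> p m"
    then obtain X0 where X0: "fuzzy_number X0"
      and lim: "(\<lambda>r. (1 / real (\<theta> (Suc r) - \<theta> r) powr \<beta>) *
              (\<Sum>k\<in>{\<theta> r<..\<theta> (Suc r)}. fdist (fdelta m X k) X0 powr p)) \<longlonglongrightarrow> 0"
      unfolding N_theta_def by blast
    define D0 where "D0 = fdist (crisp 0) X0"
    define D1 where "D1 = fdist (crisp 1) X0"
    have "1 \<le> D0 + D1" using fdist_crisp_ge[OF X0, of 0] fdist_crisp_ge[OF X0, of 1]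
      unfolding D0_def D1_def by linarith
    define c where "c = (1/2::real) powr p"
    have cpos: "0 < c" unfolding c_def by simp
    have cle: "c \<le> D1 powr p + D0 powr p"
    proof (cases "1/2 \<le> D0")
      case True
      then have "c \<le> D0 powr p" unfolding c_def using assms(4) by (intro powr_mono2) auto
      thus ?thesis by (smt (verit) powr_ge_zero)
    next
      case False
      then have "1/2 \<le> D1" using \<open>1 \<le> D0 + D1\<close> by linarith
      then have "c \<le> D1 powr p" unfolding c_def using assms(4) by (intro powr_mono2) auto
      thus ?thesis by (smt (verit) powr_ge_zero)
    qed
    have e1: "\<forall>\<^sub>F r in sequentially. real (h r) powr (- \<delta>) < 1/2"
      using d1 by (intro order_tendstoD(2)[OF tendsto_neg_powr[OF _ hlim]]) auto
    have e2: "\<forall>\<^sub>F r in sequentially. real (h r) powr (\<delta> - 1) < 1/2"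
      using d1 by (intro order_tendstoD(2)[OF tendsto_neg_powr[OF _ hlim]]) auto
    have e3: "\<forall>\<^sub>F r in sequentially. (1 / real (\<theta> (Suc r) - \<theta> r) powr \<beta>) *
              (\<Sum>k\<in>{\<theta> r<..\<theta> (Suc r)}. fdist (fdelta m X k) X0 powr p) < c/2"
      using cpos by (intro order_tendstoD(2)[OF lim]) auto
    have "\<forall>\<^sub>F r in sequentially. False"
      using e1 e2 e3
    proof eventually_elim
      case (elim r)
      let ?h = "real (h r)"
      have hp: "0 < ?h" by (rule hpos)
      have "?h powr \<delta> * ?h powr (- \<delta>) = 1" using hp by (simp add: powr_add[symmetric])
      moreover have "?h powr \<delta> * ?h powr (- \<delta>) < ?h powr \<delta> * (1/2)"
        using elim(1) hp by (intro mult_strict_left_mono) auto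
      ultimately have A: "2 < ?h powr \<delta>" by linarith
      have "?h powr \<delta> = ?h powr (\<delta> - 1) * ?h" using hp by (simp add: powr_diff)
      moreover have "?h powr (\<delta> - 1) * ?h \<le> (1/2) * ?h"
        using elim(2) hp by (intro mult_right_mono) auto
      ultimately have B: "?h powr \<delta> \<le> ?h / 2" by linarith
      have nr: "real (n r) \<le> ?h - real (n r)" using n_le_real[of r] B by linarith
      have nb: "?h powr \<beta> / 2 \<le> real (n r)"
        using n_ge_real[of r] A mono_pow[of \<beta> \<delta> r] d1 by linarith
      have D0p: "0 \<le> D0 powr p" by simp
      have "real (n r) * c \<le> real (n r) * (D1 powr p + D0 powr p)"
        using cle by (intro mult_left_mono) auto
      also have "\<dots> \<le> real (n r) * D1 powr p + real (h r - n r) * D0 powr p"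
      proof -
        have "real (n r) * D0 powr p \<le> (?h - real (n r)) * D0 powr p"
          using nr D0p by (rule mult_right_mono)
        thus ?thesis unfolding rdiff by (simp add: algebra_simps)
      qed
      finally have S: "real (n r) * c \<le> real (n r) * D1 powr p + real (h r - n r) * D0 powr p" .
      have hb: "0 < ?h powr \<beta>" using hp by simp
      have "c / 2 = (?h powr \<beta> / 2) * c / ?h powr \<beta>" using hb by simp
      also have "\<dots> \<le> real (n r) * c / ?h powr \<beta>"
        using nb cpos hb by (intro divide_right_mono mult_right_mono) auto
      also have "\<dots> \<le> (real (n r) * D1 powr p + real (h r - n r) * D0 powr p) / ?h powr \<beta>"
        using S hb by (intro divide_right_mono) auto
      finally have "c / 2 \<le> (1 / real (\<theta> (Suc r) - \<theta> r) powr \<beta>) *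
              (\<Sum>k\<in>{\<theta> r<..\<theta> (Suc r)}. fdist (fdelta m X k) X0 powr p)"
        unfolding sumX D0_def[symmetric] D1_def[symmetric] by (simp add: h_def)
      thus False using elim(3) by linarith
    qed
    thus False by simp
  qed
  show ?thesis using incl inG notB by blast
qed

end
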